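(* Let $G$ be a non-singular regular graph with $n$ vertices. Then $\operatorname{Aut}\mathcal{A}(G)\subseteq\{g_\pi:\pi\in S_n\}$, where $g_\pi$ denotes a linear map $\mathcal{A}(G)\to\mathcal{A}(G)$ of the form $g_\pi(e_i)=\alpha_i e_{\pi(i)}$ for all $i$, with nonzero scalars $\alpha_i$.
   Context: Graphs are simple (no loops or multiple edges) and connected; here $V=\{1,\dots,n\}$. The adjacency matrix is $A=(a_{ij})$ with $a_{ij}=1$ if $i,j$ are neighbors and $0$ otherwise; $G$ is non-singular if $\det A\neq0$; $G$ is regular if all vertices have the same number of neighbors. An evolution algebra over $\mathbb{R}$ is an algebra with a basis $\{e_i\}$ (natural basis) such that $e_i\cdot e_j=0$ for $i\ne j$ and $e_i\cdot e_i=\sum_k c_{ik}e_k$. $\mathcal{A}(G)$ has natural basis $\{e_1,\dots,e_n\}$ with $e_i\cdot e_i=\sum_{k}a_{ik}e_k$ and $e_i\cdot e_j=0$ for $i\ne j$. $\operatorname{Aut}\mathcal{A}(G)$ is the group of bijective linear maps $g$ with $g(u\cdot v)=g(u)\cdot g(v)$. *)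

theory Defs
  imports "HOL-Analysis.Analysis"
begin

definition simple_connected_graph :: "('n::finite \<Rightarrow> 'n \<Rightarrow> bool) \<Rightarrow> bool" where
  "simple_connected_graph E \<longleftrightarrow>
     (\<forall>i j. E i j \<longrightarrow> E j i) \<and> (\<forall>i. \<not> E i i) \<and> (\<forall>i j. E\<^sup>*\<^sup>* i j)"

definition adj_matrix :: "('n::finite \<Rightarrow> 'n \<Rightarrow> bool) \<Rightarrow> real^'n^'n" where
  "adj_matrix E = (\<chi> i j. if E i j then 1 else 0)"

definition nonsingular_graph :: "('n::finite \<Rightarrow> 'n \<Rightarrow> bool) \<Rightarrow> bool" where
  "nonsingular_graph E \<longleftrightarrow> det (adj_matrix E) \<noteq> 0"

definition regular_graph :: "('n::finite \<Rightarrow> 'n \<Rightarrow> bool) \<Rightarrow> bool" where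
  "regular_graph E \<longleftrightarrow> (\<exists>d. \<forall>i. card {j. E i j} = d)"

definition nat_basis :: "'n::finite \<Rightarrow> real^'n" where
  "nat_basis i = axis i 1"

text \<open>Product of the evolution algebra A(G): e_i e_j = 0 for i \<noteq> j, e_i e_i = sum_k a_ik e_k,
  extended bilinearly: (u v)_k = sum_i u_i v_i a_ik.\<close>
definition evo_mult :: "('n::finite \<Rightarrow> 'n \<Rightarrow> bool) \<Rightarrow> real^'n \<Rightarrow> real^'n \<Rightarrow> real^'n" where
  "evo_mult E u v = (\<chi> k. \<Sum>i\<in>UNIV. u $ i * v $ i * (adj_matrix E) $ i $ k)"

definition evo_aut :: "('n::finite \<Rightarrow> 'n \<Rightarrow> bool) \<Rightarrow> (real^'n \<Rightarrow> real^'n) \<Rightarrow> bool" where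
  "evo_aut E g \<longleftrightarrow> linear g \<and> bij g \<and> (\<forall>u v. g (evo_mult E u v) = evo_mult E (g u) (g v))"

end

theory Submission
  imports Defs "HOL-Combinatorics.Permutations"
begin

lemma evo_mult_zero:
  fixes E :: "'n::finite \<Rightarrow> 'n \<Rightarrow> bool"
  assumes "nonsingular_graph E" "evo_mult E u v = 0"
  shows "u $ k * v $ k = 0"
proof -
  define w :: "real^'n" where "w = (\<chi> i. u $ i * v $ i)"
  have "w v* adj_matrix E = evo_mult E u v"
    by (simp add: w_def vector_matrix_mult_def evo_mult_def)
  hence w0: "w v* adj_matrix E = 0" using assms(2) by simp
  have "invertible (adj_matrix E)" using assms(1) by (simp add: invertible_det_nz nonsingular_graph_def)
  then obtain B where B: "adj_matrix E ** B = mat 1" unfolding invertible_def by blast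
  have "w = w v* (adj_matrix E ** B)" by (simp add: B vector_matrix_mul_rid)
  also have "\<dots> = 0 v* B" by (simp add: vector_matrix_mul_assoc[symmetric] w0)
  also have "\<dots> = 0" by (simp add: vector_matrix_mult_def vec_eq_iff)
  finally have "w = 0" .
  thus ?thesis by (simp add: w_def vec_eq_iff)
qed

theorem proposition3p2:
  fixes E :: "'n::finite \<Rightarrow> 'n \<Rightarrow> bool"
    and g :: "real^'n \<Rightarrow> real^'n"
  assumes "simple_connected_graph E"
    and "nonsingular_graph E"
    and "regular_graph E"
    and "evo_aut E g"
  shows "\<exists>\<pi> \<alpha>. \<pi> permutes (UNIV :: 'n set) \<and> (\<forall>i. \<alpha> i \<noteq> (0::real)) \<and>
           (\<forall>i. g (nat_basis i) = \<alpha> i *\<^sub>R nat_basis (\<pi> i))"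
proof -
  define c where "c i = g (nat_basis i)" for i
  have lin: "linear g" and bj: "bij g" and hom: "\<And>u v. g (evo_mult E u v) = evo_mult E (g u) (g v)"
    using assms(4) by (auto simp: evo_aut_def)
  have g0: "g 0 = 0" using lin by (simp add: linear_0)
  have orth: "c i $ k * c j $ k = 0" if "i \<noteq> j" for i j k
  proof -
    have "evo_mult E (nat_basis i) (nat_basis j) = 0"
      using that unfolding evo_mult_def nat_basis_def vec_eq_iff axis_def
      by (auto intro!: sum.neutral)
    hence "evo_mult E (c i) (c j) = 0" using hom g0 c_def by metis
    thus ?thesis using evo_mult_zero assms(2) by blast
  qed
  have cnz: "c i \<noteq> 0" for i
  proof
    assume "c i = 0"
    hence "g (nat_basis i) = g 0" using g0 c_def by simp
    hence "nat_basis i = 0" using bj by (simp add: bij_def inj_eq)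
    thus False by (simp add: nat_basis_def axis_def vec_eq_iff) (metis zero_neq_one)
  qed
  hence "\<exists>k. c i $ k \<noteq> 0" for i by (simp add: vec_eq_iff)
  then obtain \<pi> where pi: "\<And>i. c i $ \<pi> i \<noteq> 0" by metis
  have inj: "inj \<pi>"
  proof (rule injI)
    fix i j assume "\<pi> i = \<pi> j"
    thus "i = j" using orth[of i j "\<pi> i"] pi[of i] pi[of j] by auto
  qed
  hence bpi: "bij \<pi>" using finite_UNIV_inj_surj[OF finite] by (auto simp: bij_def)
  have zero: "c i $ k = 0" if "k \<noteq> \<pi> i" for i k
  proof -
    obtain j where j: "k = \<pi> j" using bpi by (metis bij_pointE)
    hence "j \<noteq> i" using that by auto
    thus ?thesis using orth[of i j k] pi[of j] j by auto
  qed
  show ?thesis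
  proof (intro exI conjI allI)
    show "\<pi> permutes UNIV" using bpi by (rule bij_imp_permutes) simp
    show "c i $ \<pi> i \<noteq> 0" for i using pi by blast
    show "g (nat_basis i) = c i $ \<pi> i *\<^sub>R nat_basis (\<pi> i)" for i
      unfolding c_def[symmetric] using zero[of _ i]
      by (auto simp: vec_eq_iff nat_basis_def axis_def)
  qed
qed

end
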